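(* Let $p\ge 3$ be a prime, $m,k\ge1$ integers, and $t,u\in\mathbb{Z}_p$ with $u\neq 0$ and $t^2\equiv u\pmod p$. Let $G$ be the set of all $m\times k$ matrices over $\mathbb{Z}_p$ with the operation $[a_{ij}]*[b_{ij}]=[(t a_{ij}+u b_{ij})\bmod p]$. Then $(G,* )$ is a $T^3$-AG-groupoid.
   Context: An AG-groupoid is a set with a binary operation satisfying $(a*b)*c=(c*b)*a$ for all $a,b,c$ (the condition $t^2\equiv u$ ensures $G$ is one). An AG-groupoid $G$ is a $T_l^3$-AG-groupoid if for all $a,b,c\in G$, $a*b=a*c$ implies $b*a=c*a$; a $T_r^3$-AG-groupoid if $b*a=c*a$ implies $a*b=a*c$; and a $T^3$-AG-groupoid if it is both. *)

theory Defs
  imports "HOL-Computational_Algebra.Primes"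
begin

definition AG_groupoid :: "'a set \<Rightarrow> ('a \<Rightarrow> 'a \<Rightarrow> 'a) \<Rightarrow> bool" where
  "AG_groupoid G f \<longleftrightarrow>
     (\<forall>a\<in>G. \<forall>b\<in>G. f a b \<in> G) \<and>
     (\<forall>a\<in>G. \<forall>b\<in>G. \<forall>c\<in>G. f (f a b) c = f (f c b) a)"

definition Tl3_AG_groupoid :: "'a set \<Rightarrow> ('a \<Rightarrow> 'a \<Rightarrow> 'a) \<Rightarrow> bool" where
  "Tl3_AG_groupoid G f \<longleftrightarrow> AG_groupoid G f \<and>
     (\<forall>a\<in>G. \<forall>b\<in>G. \<forall>c\<in>G. f a b = f a c \<longrightarrow> f b a = f c a)"

definition Tr3_AG_groupoid :: "'a set \<Rightarrow> ('a \<Rightarrow> 'a \<Rightarrow> 'a) \<Rightarrow> bool" where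
  "Tr3_AG_groupoid G f \<longleftrightarrow> AG_groupoid G f \<and>
     (\<forall>a\<in>G. \<forall>b\<in>G. \<forall>c\<in>G. f b a = f c a \<longrightarrow> f a b = f a c)"

definition T3_AG_groupoid :: "'a set \<Rightarrow> ('a \<Rightarrow> 'a \<Rightarrow> 'a) \<Rightarrow> bool" where
  "T3_AG_groupoid G f \<longleftrightarrow> Tl3_AG_groupoid G f \<and> Tr3_AG_groupoid G f"

text \<open>m x k matrices over Z_p: entries in {0..<p} at positions i<m, j<k, and 0 elsewhere
  (canonical representatives, so equality of functions = equality of matrices).\<close>
definition zp_matrices :: "int \<Rightarrow> nat \<Rightarrow> nat \<Rightarrow> (nat \<Rightarrow> nat \<Rightarrow> int) set" where
  "zp_matrices p m k = {A. (\<forall>i j. (i < m \<and> j < k) \<longrightarrow> 0 \<le> A i j \<and> A i j < p) \<and>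
                           (\<forall>i j. \<not>(i < m \<and> j < k) \<longrightarrow> A i j = 0)}"

definition zp_op :: "int \<Rightarrow> nat \<Rightarrow> nat \<Rightarrow> int \<Rightarrow> int \<Rightarrow>
    (nat \<Rightarrow> nat \<Rightarrow> int) \<Rightarrow> (nat \<Rightarrow> nat \<Rightarrow> int) \<Rightarrow> (nat \<Rightarrow> nat \<Rightarrow> int)" where
  "zp_op p m k t u A B = (\<lambda>i j. if i < m \<and> j < k then (t * A i j + u * B i j) mod p else 0)"

end

theory Submission
  imports Defs
begin

lemma cancel_lemma:
  fixes p c x y d e :: int
  assumes "prime p" "0 < c" "c < p" "0 \<le> x" "x < p" "0 \<le> y" "y < p"
    and "(d + c * x) mod p = (d + c * y) mod p"
  shows "x = y"
proof -
  have "p dvd (d + c*x) - (d + c*y)" using assms(8) by (simp add: mod_eq_dvd_iff)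
  hence "p dvd c * (x - y)" by (simp add: algebra_simps)
  moreover have "\<not> p dvd c" using assms(2,3) zdvd_not_zless by blast
  ultimately have "p dvd (x - y)" using assms(1) prime_dvd_mult_iff by blast
  then obtain q where q: "x - y = p * q" by (auto simp: dvd_def)
  have "\<bar>x - y\<bar> < p" using assms by auto
  have "q = 0"
  proof (rule ccontr)
    assume "q \<noteq> 0"
    hence "1 \<le> \<bar>q\<bar>" by simp
    hence "p * 1 \<le> p * \<bar>q\<bar>" using assms(2,3) by (intro mult_left_mono) auto
    also have "\<dots> = \<bar>x - y\<bar>" using q assms(2,3) by (simp add: abs_mult)
    finally show False using \<open>\<bar>x - y\<bar> < p\<close> by simp
  qed
  thus ?thesis using q by simp
qed

lemma h1: "((t::int) * (X mod p) + Y) mod p = (t*X + Y) mod p"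
  by (metis mod_add_left_eq mod_mult_right_eq)
lemma h2: "((A::int) * X + Y) mod p = ((A mod p) * X + Y) mod p"
  by (metis mod_add_left_eq mod_mult_left_eq)

theorem mainTheorem5:
  fixes p t u :: int and m k :: nat
  assumes "prime p" and "p \<ge> 3" and "m \<ge> 1" and "k \<ge> 1"
    and "0 \<le> t" and "t < p" and "0 \<le> u" and "u < p"
    and "u \<noteq> 0" and "t^2 mod p = u mod p"
  shows "T3_AG_groupoid (zp_matrices p m k) (zp_op p m k t u)"
proof -
  have tpos: "t \<noteq> 0"
  proof
    assume "t = 0" thus False using assms by simp
  qed
  have clos: "\<forall>a\<in>zp_matrices p m k. \<forall>b\<in>zp_matrices p m k. zp_op p m k t u a b \<in> zp_matrices p m k"
    using assms(2) by (auto simp: zp_matrices_def zp_op_def)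
  have ag: "\<forall>a\<in>zp_matrices p m k. \<forall>b\<in>zp_matrices p m k. \<forall>c\<in>zp_matrices p m k.
      zp_op p m k t u (zp_op p m k t u a b) c = zp_op p m k t u (zp_op p m k t u c b) a"
  proof (intro ballI ext)
    fix a b c i j
    show "zp_op p m k t u (zp_op p m k t u a b) c i j = zp_op p m k t u (zp_op p m k t u c b) a i j"
    proof (cases "i < m \<and> j < k")
      case True
      have "(t * ((t * a i j + u * b i j) mod p) + u * c i j) mod p
            = (t * (t * a i j + u * b i j) + u * c i j) mod p"
        by (rule h1)
      also have "\<dots> = ((t^2) * a i j + (t*u*b i j + u * c i j)) mod p"
        by (rule arg_cong[where f="\<lambda>z. z mod p"]) (simp add: algebra_simps power2_eq_square)
      also have "\<dots> = ((t^2 mod p) * a i j + (t*u*b i j + u * c i j)) mod p"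
        by (rule h2)
      also have "\<dots> = ((u mod p) * a i j + (t*u*b i j + u * c i j)) mod p"
        using assms(10) by (simp only:)
      also have "\<dots> = (u * a i j + (t*u*b i j + u * c i j)) mod p"
        by (rule h2[symmetric])
      finally have L: "(t * ((t * a i j + u * b i j) mod p) + u * c i j) mod p
           = (u * a i j + (t*u*b i j + u * c i j)) mod p" .
      have "(t * ((t * c i j + u * b i j) mod p) + u * a i j) mod p
            = (t * (t * c i j + u * b i j) + u * a i j) mod p"
        by (rule h1)
      also have "\<dots> = ((t^2) * c i j + (t*u*b i j + u * a i j)) mod p"
        by (rule arg_cong[where f="\<lambda>z. z mod p"]) (simp add: algebra_simps power2_eq_square)
      also have "\<dots> = ((t^2 mod p) * c i j + (t*u*b i j + u * a i j)) mod p"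
        by (rule h2)
      also have "\<dots> = ((u mod p) * c i j + (t*u*b i j + u * a i j)) mod p"
        using assms(10) by (simp only:)
      also have "\<dots> = (u * c i j + (t*u*b i j + u * a i j)) mod p"
        by (rule h2[symmetric])
      finally have R: "(t * ((t * c i j + u * b i j) mod p) + u * a i j) mod p
           = (u * c i j + (t*u*b i j + u * a i j)) mod p" .
      have E: "u * a i j + (t*u*b i j + u * c i j) = u * c i j + (t*u*b i j + u * a i j)" by simp
      show ?thesis using True L R E by (simp add: zp_op_def)
    qed (auto simp add: zp_op_def)
  qed
  have AG: "AG_groupoid (zp_matrices p m k) (zp_op p m k t u)"
    using clos ag by (simp add: AG_groupoid_def)
  have l: "\<forall>a\<in>zp_matrices p m k. \<forall>b\<in>zp_matrices p m k. \<forall>c\<in>zp_matrices p m k.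
     zp_op p m k t u a b = zp_op p m k t u a c \<longrightarrow> b = c"
  proof (intro ballI impI ext)
    fix a b c i j
    assume a: "a \<in> zp_matrices p m k" and b: "b \<in> zp_matrices p m k" and c: "c \<in> zp_matrices p m k"
      and e: "zp_op p m k t u a b = zp_op p m k t u a c"
    show "b i j = c i j"
    proof (cases "i < m \<and> j < k")
      case True
      have "(t * a i j + u * b i j) mod p = (t * a i j + u * c i j) mod p"
        using fun_cong[OF fun_cong[OF e, of i], of j] True by (simp add: zp_op_def)
      thus ?thesis using cancel_lemma[OF assms(1), of u "b i j" "c i j" "t * a i j"]
        b c True assms(7,8,9) by (auto simp: zp_matrices_def)
    qed (use b c in \<open>auto simp: zp_matrices_def\<close>)
  qed
  have r: "\<forall>a\<in>zp_matrices p m k. \<forall>b\<in>zp_matrices p m k. \<forall>c\<in>zp_matrices p m k.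
     zp_op p m k t u b a = zp_op p m k t u c a \<longrightarrow> b = c"
  proof (intro ballI impI ext)
    fix a b c i j
    assume a: "a \<in> zp_matrices p m k" and b: "b \<in> zp_matrices p m k" and c: "c \<in> zp_matrices p m k"
      and e: "zp_op p m k t u b a = zp_op p m k t u c a"
    show "b i j = c i j"
    proof (cases "i < m \<and> j < k")
      case True
      have "(u * a i j + t * b i j) mod p = (u * a i j + t * c i j) mod p"
        using fun_cong[OF fun_cong[OF e, of i], of j] True by (simp add: zp_op_def add.commute)
      thus ?thesis using cancel_lemma[OF assms(1), of t "b i j" "c i j" "u * a i j"]
        b c True assms(5,6) tpos by (auto simp: zp_matrices_def)
    qed (use b c in \<open>auto simp: zp_matrices_def\<close>)
  qed
  have L3: "Tl3_AG_groupoid (zp_matrices p m k) (zp_op p m k t u)"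
    unfolding Tl3_AG_groupoid_def using AG l by metis
  have R3: "Tr3_AG_groupoid (zp_matrices p m k) (zp_op p m k t u)"
    unfolding Tr3_AG_groupoid_def using AG r by metis
  show ?thesis using L3 R3 by (simp add: T3_AG_groupoid_def)
qed

end
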